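(* The Ranked Pairs VCCR $rp$, the Beat Path VCCR $bp$, and the GOCHA VCCR $gocha$ each satisfy Coherent Defeat: for every profile $\mathbf P$ and $x,y\in X(\mathbf P)$, if $\mathrm{Margin}_{\mathbf P}(x,y)>0$ and there is no majority path from $y$ to $x$, then $(x,y)$ belongs to $rp(\mathbf P)$, $bp(\mathbf P)$ and $gocha(\mathbf P)$.
   Context: Profiles: $\mathbf P:V\to\mathcal L(X)$, $V$ nonempty finite set of voters, $X=X(\mathbf P)$ nonempty finite set of candidates, $\mathcal L(X)$ strict linear orders. $\mathrm{Margin}_{\mathbf P}(x,y)$ = #voters ranking $x$ above $y$ minus #ranking $y$ above $x$. A majority path from $x_1$ to $x_n$ is $(x_1,\dots,x_n)$ with all $\mathrm{Margin}_{\mathbf P}(x_i,x_{i+1})>0$; its strength is the minimum of these margins. Ranked Pairs: let $Pairs(\mathbf P)=\{(x,y): x\ne y,\ \mathrm{Margin}_{\mathbf P}(x,y)\ge 0\}$; a tie-breaker is a strict linear order $L$ on $Pairs(\mathbf P)$. Order $Pairs(\mathbf P)$ by decreasing margin, breaking ties by $L$: $(x_1,y_1),\dots,(x_m,y_m)$. Let $D_0=\varnothing$, and $D_i=D_{i-1}\cup\{(x_i,y_i)\}$ if this is acyclic, else $D_i=D_{i-1}\cup\{(y_i,x_i)\}$; set $rp(\mathbf P,L)=D_m$ and $rp(\mathbf P)=\bigcap_L rp(\mathbf P,L)$ over all tie-breakers $L$. Beat Path: $\mathrm{Strength}_{\mathbf P}(x,y)$ is the maximum strength of a majority path from $x$ to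 $y$ ($0$ if none); $(x,y)\in bp(\mathbf P)$ iff $\mathrm{Strength}_{\mathbf P}(x,y)>\mathrm{Strength}_{\mathbf P}(y,x)$. GOCHA: $(x,y)\in gocha(\mathbf P)$ iff there is a majority path from $x$ to $y$ but none from $y$ to $x$. *)

theory Defs
  imports Main
begin

text \<open>A profile: nonempty finite voter set V, nonempty finite candidate set X,
  each voter i in V has a strict linear order P i on X (as a relation;
  (a,b) \<in> P i means voter i ranks a above b).\<close>
definition profile :: "'v set \<Rightarrow> 'c set \<Rightarrow> ('v \<Rightarrow> 'c rel) \<Rightarrow> bool" where
  "profile V X P \<longleftrightarrow> finite V \<and> V \<noteq> {} \<and> finite X \<and> X \<noteq> {} \<and>
     (\<forall>i\<in>V. strict_linear_order_on X (P i) \<and> P i \<subseteq> X \<times> X)"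

definition Margin :: "'v set \<Rightarrow> ('v \<Rightarrow> 'c rel) \<Rightarrow> 'c \<Rightarrow> 'c \<Rightarrow> int" where
  "Margin V P x y = int (card {i\<in>V. (x, y) \<in> P i}) - int (card {i\<in>V. (y, x) \<in> P i})"

definition majority_path :: "'v set \<Rightarrow> 'c set \<Rightarrow> ('v \<Rightarrow> 'c rel) \<Rightarrow> 'c list \<Rightarrow> bool" where
  "majority_path V X P xs \<longleftrightarrow> 2 \<le> length xs \<and> set xs \<subseteq> X \<and>
     (\<forall>k. Suc k < length xs \<longrightarrow> 0 < Margin V P (xs ! k) (xs ! Suc k))"

definition majority_path_from_to ::
    "'v set \<Rightarrow> 'c set \<Rightarrow> ('v \<Rightarrow> 'c rel) \<Rightarrow> 'c \<Rightarrow> 'c \<Rightarrow> 'c list \<Rightarrow> bool" where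
  "majority_path_from_to V X P x y xs \<longleftrightarrow>
     majority_path V X P xs \<and> hd xs = x \<and> last xs = y"

definition path_strength :: "'v set \<Rightarrow> ('v \<Rightarrow> 'c rel) \<Rightarrow> 'c list \<Rightarrow> int" where
  "path_strength V P xs = Min {Margin V P (xs ! k) (xs ! Suc k) | k. Suc k < length xs}"

definition Strength :: "'v set \<Rightarrow> 'c set \<Rightarrow> ('v \<Rightarrow> 'c rel) \<Rightarrow> 'c \<Rightarrow> 'c \<Rightarrow> int" where
  "Strength V X P x y =
     (if \<exists>xs. majority_path_from_to V X P x y xs
      then Max {path_strength V P xs | xs. majority_path_from_to V X P x y xs}
      else 0)"

definition bp :: "'v set \<Rightarrow> 'c set \<Rightarrow> ('v \<Rightarrow> 'c rel) \<Rightarrow> 'c rel" where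
  "bp V X P = {(x, y). x \<in> X \<and> y \<in> X \<and> Strength V X P x y > Strength V X P y x}"

definition gocha :: "'v set \<Rightarrow> 'c set \<Rightarrow> ('v \<Rightarrow> 'c rel) \<Rightarrow> 'c rel" where
  "gocha V X P = {(x, y). x \<in> X \<and> y \<in> X \<and>
     (\<exists>xs. majority_path_from_to V X P x y xs) \<and>
     \<not> (\<exists>xs. majority_path_from_to V X P y x xs)}"

definition Pairs :: "'v set \<Rightarrow> 'c set \<Rightarrow> ('v \<Rightarrow> 'c rel) \<Rightarrow> 'c rel" where
  "Pairs V X P = {(x, y). x \<in> X \<and> y \<in> X \<and> x \<noteq> y \<and> 0 \<le> Margin V P x y}"

definition tie_breaker :: "'v set \<Rightarrow> 'c set \<Rightarrow> ('v \<Rightarrow> 'c rel) \<Rightarrow> ('c \<times> 'c) rel \<Rightarrow> bool" where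
  "tie_breaker V X P L \<longleftrightarrow> strict_linear_order_on (Pairs V X P) L \<and>
     L \<subseteq> Pairs V X P \<times> Pairs V X P"

definition rp_order ::
    "'v set \<Rightarrow> 'c set \<Rightarrow> ('v \<Rightarrow> 'c rel) \<Rightarrow> ('c \<times> 'c) rel \<Rightarrow> ('c \<times> 'c) list \<Rightarrow> bool" where
  "rp_order V X P L ps \<longleftrightarrow> distinct ps \<and> set ps = Pairs V X P \<and>
     sorted_wrt (\<lambda>(a, b) (c, d). Margin V P a b > Margin V P c d \<or>
                   (Margin V P a b = Margin V P c d \<and> ((a, b), (c, d)) \<in> L)) ps"

definition rp_step :: "'c rel \<Rightarrow> 'c \<times> 'c \<Rightarrow> 'c rel" where
  "rp_step D p = (if acyclic (insert p D) then insert p D else insert (snd p, fst p) D)"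

definition rp_run :: "('c \<times> 'c) list \<Rightarrow> 'c rel" where
  "rp_run ps = foldl rp_step {} ps"

text \<open>rp(P,L) = D_m for the (unique) ordering determined by L; rp(P) is the
  intersection over all tie-breakers L.\<close>
definition rp :: "'v set \<Rightarrow> 'c set \<Rightarrow> ('v \<Rightarrow> 'c rel) \<Rightarrow> 'c rel" where
  "rp V X P = {(x, y). \<forall>L ps. tie_breaker V X P L \<and> rp_order V X P L ps \<longrightarrow> (x, y) \<in> rp_run ps}"

end

theory Submission
  imports Defs
begin

definition MR :: "'v set \<Rightarrow> 'c set \<Rightarrow> ('v \<Rightarrow> 'c rel) \<Rightarrow> 'c rel" where
  "MR V X P = {(a,b). a \<in> X \<and> b \<in> X \<and> 0 < Margin V P a b}"

lemma ne_setI: "a \<in> A \<Longrightarrow> A \<noteq> {}" by auto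

lemma Margin_anti: "Margin V P y x = - Margin V P x y"
  by (simp add: Margin_def)

lemma Margin_refl: "Margin V P x x = 0"
  by (simp add: Margin_def)

lemma MR_path:
  assumes "(a,b) \<in> (MR V X P)\<^sup>+"
  shows "\<exists>xs. majority_path_from_to V X P a b xs"
  using assms
proof (induction rule: converse_trancl_induct)
  case (base a)
  then show ?case
    apply (rule_tac x="[a,b]" in exI)
    apply (auto simp: majority_path_from_to_def majority_path_def MR_def less_Suc_eq)
    done
next
  case (step a c)
  then obtain xs where xs: "majority_path_from_to V X P c b xs" by blast
  have "majority_path_from_to V X P a b (a # xs)"
    unfolding majority_path_from_to_def majority_path_def
  proof (intro conjI allI impI)
    show "2 \<le> length (a # xs)" using xs by (auto simp: majority_path_from_to_def majority_path_def)
    show "set (a # xs) \<subseteq> X" using xs step(1) by (auto simp: majority_path_from_to_def majority_path_def MR_def)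
    show "hd (a # xs) = a" by simp
    show "last (a # xs) = b" using xs by (auto simp: majority_path_from_to_def majority_path_def)
  next
    fix k assume k: "Suc k < length (a # xs)"
    show "0 < Margin V P ((a # xs) ! k) ((a # xs) ! Suc k)"
    proof (cases k)
      case 0
      have "xs ! 0 = c" using xs by (cases xs) (auto simp: majority_path_from_to_def majority_path_def)
      then show ?thesis using 0 step(1) by (simp add: MR_def)
    next
      case (Suc j)
      then show ?thesis using xs k by (auto simp: majority_path_from_to_def majority_path_def)
    qed
  qed
  then show ?case by blast
qed

lemma step_mono: "D \<subseteq> rp_step D p"
  by (auto simp: rp_step_def)

lemma run_mono: "D \<subseteq> foldl rp_step D ps"
proof (induction ps arbitrary: D)
  case Nil then show ?case by simp
next
  case (Cons p ps)
  then show ?case using step_mono[of D p] by (simp, blast)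
qed

lemma step_acyclic:
  assumes "acyclic D" "a \<noteq> b"
  shows "acyclic (rp_step D (a,b))"
proof (cases "acyclic (insert (a,b) D)")
  case True then show ?thesis by (simp add: rp_step_def)
next
  case False
  then obtain c where "(c,c) \<in> (insert (a,b) D)\<^sup>+" by (auto simp: acyclic_def)
  then have "(c,c) \<in> D\<^sup>+ \<or> ((c,a) \<in> D\<^sup>* \<and> (b,c) \<in> D\<^sup>*)" by (simp add: trancl_insert)
  then have ba: "(b,a) \<in> D\<^sup>*" using assms(1) by (auto simp: acyclic_def)
  have "acyclic (insert (b,a) D)"
  proof (rule ccontr)
    assume "\<not> acyclic (insert (b,a) D)"
    then obtain c where "(c,c) \<in> (insert (b,a) D)\<^sup>+" by (auto simp: acyclic_def)
    then have "(c,c) \<in> D\<^sup>+ \<or> ((c,b) \<in> D\<^sup>* \<and> (a,c) \<in> D\<^sup>*)" by (simp add: trancl_insert)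
    then have ab: "(a,b) \<in> D\<^sup>*" using assms(1) by (auto simp: acyclic_def)
    have "(a,a) \<in> D\<^sup>+" using ab ba assms(2)
      by (metis rtrancl_eq_or_trancl rtrancl_trancl_trancl)
    then show False using assms(1) by (auto simp: acyclic_def)
  qed
  then show ?thesis using False by (simp add: rp_step_def)
qed

lemma step_inv:
  assumes "acyclic D" "D \<subseteq> (MR V X P)\<^sup>+" "(a,b) \<in> MR V X P" "a \<noteq> b"
  shows "rp_step D (a,b) \<subseteq> (MR V X P)\<^sup>+"
proof (cases "acyclic (insert (a,b) D)")
  case True then show ?thesis using assms by (auto simp: rp_step_def)
next
  case False
  then obtain c where "(c,c) \<in> (insert (a,b) D)\<^sup>+" by (auto simp: acyclic_def)
  then have "(c,c) \<in> D\<^sup>+ \<or> ((c,a) \<in> D\<^sup>* \<and> (b,c) \<in> D\<^sup>*)" by (simp add: trancl_insert)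
  then have ba: "(b,a) \<in> D\<^sup>*" using assms(1) by (auto simp: acyclic_def)
  have "D\<^sup>* \<subseteq> ((MR V X P)\<^sup>+)\<^sup>*" using assms(2) by (rule rtrancl_mono)
  then have "(b,a) \<in> (MR V X P)\<^sup>*" using ba by auto
  then have "(b,a) \<in> (MR V X P)\<^sup>+" using assms(4) by (simp add: rtrancl_eq_or_trancl)
  then show ?thesis using False assms(2) by (auto simp: rp_step_def)
qed

lemma run_inv:
  assumes "acyclic D" "D \<subseteq> (MR V X P)\<^sup>+"
    "\<forall>(a,b)\<in>set ps. (a,b) \<in> MR V X P \<and> a \<noteq> b"
  shows "acyclic (foldl rp_step D ps) \<and> foldl rp_step D ps \<subseteq> (MR V X P)\<^sup>+"
  using assms
proof (induction ps arbitrary: D)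
  case Nil then show ?case by simp
next
  case (Cons p ps)
  obtain a b where p: "p = (a,b)" by fastforce
  have "acyclic (rp_step D p)" using step_acyclic Cons.prems p by auto
  moreover have "rp_step D p \<subseteq> (MR V X P)\<^sup>+" using step_inv[of D V X P a b] Cons.prems p by simp
  ultimately show ?case using Cons by simp
qed

theorem proposition3p8:
  fixes V :: "'v set" and X :: "'c set" and P :: "'v \<Rightarrow> 'c rel" and x y :: 'c
  assumes "profile V X P"
    and "x \<in> X" and "y \<in> X"
    and "Margin V P x y > 0"
    and "\<not> (\<exists>xs. majority_path_from_to V X P y x xs)"
  shows "(x, y) \<in> rp V X P \<and> (x, y) \<in> bp V X P \<and> (x, y) \<in> gocha V X P"
proof -
  have xy: "x \<noteq> y" using assms(4) Margin_refl by (metis less_irrefl)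
  have pxy: "majority_path_from_to V X P x y [x,y]"
    using assms by (auto simp: majority_path_from_to_def majority_path_def less_Suc_eq)
  have G: "(x, y) \<in> gocha V X P" using assms pxy by (auto simp: gocha_def)
  have finX: "finite X" using assms(1) by (simp add: profile_def)
  have B: "(x, y) \<in> bp V X P"
  proof -
    have s0: "Strength V X P y x = 0" using assms(5) by (simp add: Strength_def)
    let ?S = "{path_strength V P xs | xs. majority_path_from_to V X P x y xs}"
    have sub: "?S \<subseteq> (\<lambda>(a,b). Margin V P a b) ` (X \<times> X)"
    proof
      fix s assume "s \<in> ?S"
      then obtain xs where xs: "majority_path_from_to V X P x y xs" and s: "s = path_strength V P xs" by blast
      let ?T = "{Margin V P (xs ! k) (xs ! Suc k) | k. Suc k < length xs}"
      have "?T = (\<lambda>k. Margin V P (xs ! k) (xs ! Suc k)) ` {k. Suc k < length xs}" by auto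
      moreover have "finite {k. Suc k < length xs}" by (rule finite_subset[of _ "{..<length xs}"]) auto
      ultimately have fT: "finite ?T" by simp
      have "Suc 0 < length xs" using xs by (auto simp: majority_path_from_to_def majority_path_def)
      then have "Margin V P (xs!0) (xs!Suc 0) \<in> ?T" by blast
      then have "?T \<noteq> {}" by (rule ne_setI)
      then have "Min ?T \<in> ?T" using fT by (rule_tac Min_in)
      then have "s \<in> ?T" using s unfolding path_strength_def by simp
      then obtain k where k: "Suc k < length xs" and sk: "s = Margin V P (xs ! k) (xs ! Suc k)" by blast
      have "set xs \<subseteq> X" using xs by (auto simp: majority_path_from_to_def majority_path_def)
      then have "xs ! k \<in> X" "xs ! Suc k \<in> X" using k by auto
      then show "s \<in> (\<lambda>(a,b). Margin V P a b) ` (X \<times> X)" using sk by force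
    qed
    have fS: "finite ?S" using sub finX by (meson finite_SigmaI finite_imageI finite_subset)
    have ps: "path_strength V P [x,y] = Margin V P x y"
    proof -
      have "{Margin V P ([x,y] ! k) ([x,y] ! Suc k) | k. Suc k < length [x,y]} = {Margin V P x y}"
        by (auto simp: less_Suc_eq)
      then show ?thesis by (simp add: path_strength_def)
    qed
    have "path_strength V P [x,y] \<in> ?S" using pxy by auto
    then have "path_strength V P [x,y] \<le> Max ?S" by (rule Max_ge[OF fS])
    then have "Margin V P x y \<le> Max ?S" using ps by simp
    then have "Strength V X P x y > 0" using assms(4) pxy by (auto simp: Strength_def)
    then show ?thesis using s0 assms by (simp add: bp_def)
  qed
  have R: "(x, y) \<in> rp V X P"
    unfolding rp_def
  proof (clarsimp)
    fix L ps
    assume tb: "tie_breaker V X P L" and ro: "rp_order V X P L ps"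
    have "(x,y) \<in> Pairs V X P" using assms xy by (auto simp: Pairs_def)
    then have "(x,y) \<in> set ps" using ro by (simp add: rp_order_def)
    then obtain pre post where ps: "ps = pre @ (x,y) # post" by (meson split_list)
    have sw: "sorted_wrt (\<lambda>(a, b) (c, d). Margin V P a b > Margin V P c d \<or>
                   (Margin V P a b = Margin V P c d \<and> ((a, b), (c, d)) \<in> L)) ps"
      using ro by (simp add: rp_order_def)
    have setps: "set ps = Pairs V X P" using ro by (simp add: rp_order_def)
    have pre: "\<forall>(a,b)\<in>set pre. (a,b) \<in> MR V X P \<and> a \<noteq> b"
    proof (clarify)
      fix a b assume ab: "(a,b) \<in> set pre"
      then have "Margin V P a b \<ge> Margin V P x y" using sw ps by (auto simp: sorted_wrt_append)
      moreover have "(a,b) \<in> Pairs V X P" using ab ps setps by auto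
      ultimately show "(a,b) \<in> MR V X P \<and> a \<noteq> b" using assms(4)
        by (auto simp: Pairs_def MR_def)
    qed
    define D where "D = foldl rp_step {} pre"
    have inv: "acyclic D \<and> D \<subseteq> (MR V X P)\<^sup>+"
      unfolding D_def by (rule run_inv) (use pre in \<open>auto simp: acyclic_def\<close>)
    have "acyclic (insert (x,y) D)"
    proof (rule ccontr)
      assume "\<not> acyclic (insert (x,y) D)"
      then obtain c where "(c,c) \<in> (insert (x,y) D)\<^sup>+" by (auto simp: acyclic_def)
      then have "(c,c) \<in> D\<^sup>+ \<or> ((c,x) \<in> D\<^sup>* \<and> (y,c) \<in> D\<^sup>*)" by (simp add: trancl_insert)
      then have yx: "(y,x) \<in> D\<^sup>*" using inv by (auto simp: acyclic_def)
      have "D\<^sup>* \<subseteq> ((MR V X P)\<^sup>+)\<^sup>*" using inv by (intro rtrancl_mono) blast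
      then have "(y,x) \<in> (MR V X P)\<^sup>*" using yx by auto
      then have "(y,x) \<in> (MR V X P)\<^sup>+" using xy by (simp add: rtrancl_eq_or_trancl)
      then have "\<exists>xs. majority_path_from_to V X P y x xs" by (rule MR_path)
      with assms(5) show False by blast
    qed
    then have "(x,y) \<in> rp_step D (x,y)" by (simp add: rp_step_def)
    then have "(x,y) \<in> foldl rp_step (rp_step D (x,y)) post" using run_mono by blast
    then show "(x,y) \<in> rp_run ps" by (simp add: rp_run_def ps D_def)
  qed
  show ?thesis using R B G by blast
qed

end
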